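(* Let $G$ be a finite group and let $\{M_1,\dots,M_t\}$ be a maximal irredundant family of maximal subgroups of $G$. Then $\mathrm{core}_G(M_1\cap\dots\cap M_t)=\Phi(G)$, where $\Phi(G)$ is the Frattini subgroup of $G$ and $\mathrm{core}_G(X)$ is the largest normal subgroup of $G$ contained in $X$.
   Context: A set $\mathcal X$ of maximal subgroups of $G$ is irredundant if the intersection of the members of $\mathcal X$ is not equal to the intersection of the members of any proper subset of $\mathcal X$. An irredundant set is maximal irredundant if it is not properly contained in any other irredundant set of maximal subgroups of $G$. *)

theory Defs
  imports "HOL-Algebra.Algebra"
begin

definition maximal_subgroup :: "('a, 'b) monoid_scheme \<Rightarrow> 'a set \<Rightarrow> bool" where
  "maximal_subgroup G M \<longleftrightarrow> subgroup M G \<and> M \<noteq> carrier G \<and>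
     (\<forall>H. subgroup H G \<and> M \<subseteq> H \<longrightarrow> H = M \<or> H = carrier G)"

text \<open>Intersection of a family of subsets of G, the empty family giving G itself.\<close>
definition grp_Inter :: "('a, 'b) monoid_scheme \<Rightarrow> 'a set set \<Rightarrow> 'a set" where
  "grp_Inter G Ms = {x \<in> carrier G. \<forall>M\<in>Ms. x \<in> M}"

definition frattini :: "('a, 'b) monoid_scheme \<Rightarrow> 'a set" where
  "frattini G = grp_Inter G {M. maximal_subgroup G M}"

definition irredundant :: "('a, 'b) monoid_scheme \<Rightarrow> 'a set set \<Rightarrow> bool" where
  "irredundant G Ms \<longleftrightarrow> (\<forall>M\<in>Ms. maximal_subgroup G M) \<and>
     (\<forall>Ns. Ns \<subset> Ms \<longrightarrow> grp_Inter G Ns \<noteq> grp_Inter G Ms)"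

definition maximal_irredundant :: "('a, 'b) monoid_scheme \<Rightarrow> 'a set set \<Rightarrow> bool" where
  "maximal_irredundant G Ms \<longleftrightarrow> irredundant G Ms \<and>
     (\<forall>Ns. irredundant G Ns \<longrightarrow> \<not> Ms \<subset> Ns)"

definition is_core :: "('a, 'b) monoid_scheme \<Rightarrow> 'a set \<Rightarrow> 'a set \<Rightarrow> bool" where
  "is_core G S C \<longleftrightarrow> C \<lhd> G \<and> C \<subseteq> S \<and> (\<forall>N. N \<lhd> G \<and> N \<subseteq> S \<longrightarrow> N \<subseteq> C)"

end

theory Submission
  imports Defs
begin

lemma conj_subgroup:
  fixes G (structure)
  assumes G: "group G" and H: "subgroup H G" and g: "g \<in> carrier G"
  shows "subgroup {x \<in> carrier G. g \<otimes>\<^bsub>G\<^esub> x \<otimes>\<^bsub>G\<^esub> inv\<^bsub>G\<^esub> g \<in> H} G"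
proof -
  interpret group G by fact
  show ?thesis
  proof (rule subgroup.intro)
    show "{x \<in> carrier G. g \<otimes> x \<otimes> inv g \<in> H} \<subseteq> carrier G" by auto
  next
    show "\<one> \<in> {x \<in> carrier G. g \<otimes> x \<otimes> inv g \<in> H}"
      using g H by (simp add: subgroup.one_closed)
  next
    fix x y assume x: "x \<in> {x \<in> carrier G. g \<otimes> x \<otimes> inv g \<in> H}"
      and y: "y \<in> {x \<in> carrier G. g \<otimes> x \<otimes> inv g \<in> H}"
    have "(g \<otimes> x \<otimes> inv g) \<otimes> (g \<otimes> y \<otimes> inv g) \<in> H"
      using x y H by (simp add: subgroup.m_closed)
    moreover have "(g \<otimes> x \<otimes> inv g) \<otimes> (g \<otimes> y \<otimes> inv g) = g \<otimes> (x \<otimes> y) \<otimes> inv g"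
      using x y g by (simp add: m_assoc) (simp add: m_assoc[symmetric])
    ultimately show "x \<otimes> y \<in> {x \<in> carrier G. g \<otimes> x \<otimes> inv g \<in> H}" using x y by auto
  next
    fix x assume x: "x \<in> {x \<in> carrier G. g \<otimes> x \<otimes> inv g \<in> H}"
    have "inv (g \<otimes> x \<otimes> inv g) \<in> H"
      using x H by (simp add: subgroup.m_inv_closed)
    moreover have "inv (g \<otimes> x \<otimes> inv g) = g \<otimes> inv x \<otimes> inv g"
      using x g by (simp add: inv_mult_group m_assoc)
    ultimately show "inv x \<in> {x \<in> carrier G. g \<otimes> x \<otimes> inv g \<in> H}" using x by auto
  qed
qed

lemma conj_maximal:
  fixes G (structure)
  assumes G: "group G" and M: "maximal_subgroup G M" and g: "g \<in> carrier G"
  shows "maximal_subgroup G {x \<in> carrier G. g \<otimes>\<^bsub>G\<^esub> x \<otimes>\<^bsub>G\<^esub> inv\<^bsub>G\<^esub> g \<in> M}"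
proof -
  interpret group G by fact
  let ?Mg = "{x \<in> carrier G. g \<otimes> x \<otimes> inv g \<in> M}"
  have sM: "subgroup M G" and nM: "M \<noteq> carrier G"
    and mx: "\<And>H. subgroup H G \<Longrightarrow> M \<subseteq> H \<Longrightarrow> H = M \<or> H = carrier G"
    using M unfolding maximal_subgroup_def by auto
  have MC: "M \<subseteq> carrier G" using sM subgroup.subset by blast
  have key: "\<And>m. m \<in> carrier G \<Longrightarrow> g \<otimes> (inv g \<otimes> m \<otimes> g) \<otimes> inv g = m"
    using g by (simp add: m_assoc) (simp add: m_assoc[symmetric])
  have key2: "\<And>m. m \<in> carrier G \<Longrightarrow> inv g \<otimes> (g \<otimes> m \<otimes> inv g) \<otimes> g = m"
    using g by (simp add: m_assoc) (simp add: m_assoc[symmetric])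
  have s: "subgroup ?Mg G" using conj_subgroup[OF G sM g] .
  moreover have "?Mg \<noteq> carrier G"
  proof
    assume eq: "?Mg = carrier G"
    have "carrier G \<subseteq> M"
    proof
      fix m assume m: "m \<in> carrier G"
      have "inv g \<otimes> m \<otimes> g \<in> ?Mg" using eq m g by simp
      then show "m \<in> M" using key[OF m] by simp
    qed
    then show False using nM MC by blast
  qed
  moreover have "H = ?Mg \<or> H = carrier G" if H: "subgroup H G" "?Mg \<subseteq> H" for H
  proof -
    let ?H' = "{x \<in> carrier G. inv g \<otimes> x \<otimes> inv (inv g) \<in> H}"
    have sH': "subgroup ?H' G" using conj_subgroup[OF G H(1), of "inv g"] g by simp
    have "M \<subseteq> ?H'"
    proof
      fix m assume m: "m \<in> M"
      with MC have mc: "m \<in> carrier G" by blast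
      have "inv g \<otimes> m \<otimes> g \<in> ?Mg" using key[OF mc] m mc g by simp
      then show "m \<in> ?H'" using H(2) mc g by auto
    qed
    then have "?H' = M \<or> ?H' = carrier G" using mx sH' by blast
    then show ?thesis
    proof
      assume e: "?H' = M"
      have "H \<subseteq> ?Mg"
      proof
        fix x assume x: "x \<in> H"
        with H(1) have xc: "x \<in> carrier G" using subgroup.subset by blast
        have "g \<otimes> x \<otimes> inv g \<in> ?H'" using key2[OF xc] x xc g by simp
        then show "x \<in> ?Mg" using e xc by simp
      qed
      then show ?thesis using H(2) by blast
    next
      assume e: "?H' = carrier G"
      have "carrier G \<subseteq> H"
      proof
        fix x assume xc: "x \<in> carrier G"
        then have "g \<otimes> x \<otimes> inv g \<in> ?H'" using e g by simp
        then show "x \<in> H" using key2[OF xc] g by simp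
      qed
      then show ?thesis using H(1) subgroup.subset by blast
    qed
  qed
  ultimately show ?thesis unfolding maximal_subgroup_def by blast
qed


theorem mainTheorem2:
  fixes G (structure) and Ms :: "'a set set"
  assumes "group G" and "finite (carrier G)"
    and "maximal_irredundant G Ms"
  shows "is_core G (grp_Inter G Ms) (frattini G)"
proof -
  interpret group G by fact
  have irr: "irredundant G Ms" and mxi: "\<And>Ns. irredundant G Ns \<Longrightarrow> \<not> Ms \<subset> Ns"
    using assms(3) unfolding maximal_irredundant_def by auto
  have MsM: "\<And>M. M \<in> Ms \<Longrightarrow> maximal_subgroup G M"
    and irr2: "\<And>Ns. Ns \<subset> Ms \<Longrightarrow> grp_Inter G Ns \<noteq> grp_Inter G Ms"
    using irr unfolding irredundant_def by auto
  have msub: "\<And>M. maximal_subgroup G M \<Longrightarrow> subgroup M G"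
    unfolding maximal_subgroup_def by auto
  have sub1: "frattini G \<subseteq> grp_Inter G Ms"
    unfolding frattini_def grp_Inter_def using MsM by auto
  have nrm: "frattini G \<lhd> G"
  proof (subst normal_inv_iff, intro conjI ballI)
    show "subgroup (frattini G) G"
    proof (rule subgroup.intro)
      show "frattini G \<subseteq> carrier G" unfolding frattini_def grp_Inter_def by auto
    next
      show "\<one> \<in> frattini G" unfolding frattini_def grp_Inter_def
        using msub subgroup.one_closed by auto
    next
      fix x y assume "x \<in> frattini G" "y \<in> frattini G"
      then show "x \<otimes> y \<in> frattini G" unfolding frattini_def grp_Inter_def
        using msub subgroup.m_closed by fastforce
    next
      fix x assume "x \<in> frattini G"
      then show "inv x \<in> frattini G" unfolding frattini_def grp_Inter_def
        using msub subgroup.m_inv_closed by fastforce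
    qed
  next
    fix g h assume g: "g \<in> carrier G" and h: "h \<in> frattini G"
    have hc: "h \<in> carrier G" using h unfolding frattini_def grp_Inter_def by auto
    have "g \<otimes> h \<otimes> inv g \<in> M" if M: "maximal_subgroup G M" for M
    proof -
      have "maximal_subgroup G {x \<in> carrier G. g \<otimes> x \<otimes> inv g \<in> M}"
        using conj_maximal[OF assms(1) M g] .
      then show ?thesis using h hc unfolding frattini_def grp_Inter_def by auto
    qed
    then show "g \<otimes> h \<otimes> inv g \<in> frattini G"
      unfolding frattini_def grp_Inter_def using g hc by auto
  qed
  have sub2: "N \<subseteq> frattini G" if N: "N \<lhd> G" "N \<subseteq> grp_Inter G Ms" for N
  proof (rule ccontr)
    assume "\<not> N \<subseteq> frattini G"
    then obtain n M where n: "n \<in> N" and M: "maximal_subgroup G M" and nM: "n \<notin> M"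
      using N unfolding frattini_def grp_Inter_def by auto
    have Nsub: "subgroup N G" using N(1) normal_imp_subgroup by blast
    have NC: "N \<subseteq> carrier G" using Nsub subgroup.subset by blast
    have sM: "subgroup M G" using M msub by blast
    have MC: "M \<subseteq> carrier G" using sM subgroup.subset by blast
    have MnotMs: "M \<notin> Ms" using n nM N(2) unfolding grp_Inter_def by auto
    have NMs: "subgroup (N <#> M) G" using mult_norm_subgroup[OF N(1) sM] .
    have "M \<subseteq> N <#> M"
    proof
      fix m assume "m \<in> M"
      then have "\<one> \<otimes> m \<in> N <#> M" unfolding set_mult_def
        using Nsub subgroup.one_closed by fastforce
      then show "m \<in> N <#> M" using \<open>m \<in> M\<close> MC by auto
    qed
    moreover have "n \<in> N <#> M"
    proof -
      have "n \<otimes> \<one> \<in> N <#> M" unfolding set_mult_def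
        using n sM subgroup.one_closed by fastforce
      then show ?thesis using n NC by auto
    qed
    ultimately have NMG: "N <#> M = carrier G"
      using M NMs nM unfolding maximal_subgroup_def by blast
    let ?Ms' = "insert M Ms"
    have "irredundant G ?Ms'"
      unfolding irredundant_def
    proof (intro conjI allI impI)
      show "\<forall>M'\<in>?Ms'. maximal_subgroup G M'" using M MsM by auto
    next
      fix Ns assume Ns: "Ns \<subset> ?Ms'"
      then obtain K where K: "K \<in> ?Ms'" "K \<notin> Ns" by blast
      have mono: "grp_Inter G (?Ms' - {K}) \<subseteq> grp_Inter G Ns"
        using Ns K unfolding grp_Inter_def by blast
      have "\<exists>z. z \<in> grp_Inter G (?Ms' - {K}) \<and> z \<notin> K"
      proof (cases "K = M")
        case True
        then have "?Ms' - {K} = Ms" using MnotMs by auto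
        then show ?thesis using True n N(2) nM by auto
      next
        case False
        then have KMs: "K \<in> Ms" using K by auto
        have "Ms - {K} \<subset> Ms" using KMs by auto
        then have ne: "grp_Inter G (Ms - {K}) \<noteq> grp_Inter G Ms" using irr2 by blast
        have "grp_Inter G Ms \<subseteq> grp_Inter G (Ms - {K})" unfolding grp_Inter_def by auto
        with ne obtain y where y: "y \<in> grp_Inter G (Ms - {K})" "y \<notin> grp_Inter G Ms" by blast
        then have yK: "y \<notin> K" and yc: "y \<in> carrier G" unfolding grp_Inter_def by auto
        then obtain n' m where n': "n' \<in> N" and m: "m \<in> M" and ynm: "y = n' \<otimes> m"
        proof -
          have "y \<in> N <#> M" using NMG yc by simp
          then have "\<exists>a\<in>N. \<exists>b\<in>M. y = a \<otimes> b" unfolding set_mult_def by simp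
          then show ?thesis using that by blast
        qed
        have n'c: "n' \<in> carrier G" and mc: "m \<in> carrier G" using n' m NC MC by auto
        have meq: "m = inv n' \<otimes> y" by (rule iffD2[OF inv_solve_left[OF mc n'c yc] ynm])
        have invn: "inv n' \<in> N" by (rule subgroup.m_inv_closed[OF Nsub n'])
        have "inv n' \<in> grp_Inter G Ms" by (rule subsetD[OF N(2) invn])
        then have "inv n' \<in> grp_Inter G (Ms - {K})" unfolding grp_Inter_def by auto
        have smK: "\<And>L. L \<in> Ms \<Longrightarrow> subgroup L G" using MsM msub by blast
        have m1: "m \<in> grp_Inter G (Ms - {K})"
          unfolding grp_Inter_def
        proof (intro CollectI conjI ballI)
          show "m \<in> carrier G" using mc .
          fix L assume L: "L \<in> Ms - {K}"
          have iL: "inv n' \<in> L" "y \<in> L"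
            using \<open>inv n' \<in> grp_Inter G (Ms - {K})\<close> y(1) L unfolding grp_Inter_def by auto
          have sL: "subgroup L G" using L smK by blast
          have "inv n' \<otimes> y \<in> L" by (rule subgroup.m_closed[OF sL iL(1) iL(2)])
          then show "m \<in> L" by (subst meq)
        qed
        have "inv n' \<in> K" using \<open>inv n' \<in> grp_Inter G Ms\<close> KMs unfolding grp_Inter_def by auto
        have mK: "m \<notin> K"
        proof
          assume mK0: "m \<in> K"
          have nK: "n' \<in> K" using n' N(2) KMs unfolding grp_Inter_def by auto
          have sK: "subgroup K G" using KMs smK by blast
          have "n' \<otimes> m \<in> K" by (rule subgroup.m_closed[OF sK nK mK0])
          then show False using yK ynm by simp
        qed
        have "?Ms' - {K} = insert M (Ms - {K})" using False by auto
        then have "m \<in> grp_Inter G (?Ms' - {K})" using m1 m unfolding grp_Inter_def by auto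
        then show ?thesis using mK by blast
      qed
      then obtain z where "z \<in> grp_Inter G (?Ms' - {K})" "z \<notin> K" by blast
      then have "z \<in> grp_Inter G Ns" "z \<notin> grp_Inter G ?Ms'"
        using mono K unfolding grp_Inter_def by auto
      then show "grp_Inter G Ns \<noteq> grp_Inter G ?Ms'" by blast
    qed
    moreover have "Ms \<subset> ?Ms'" using MnotMs by auto
    ultimately show False using mxi by blast
  qed
  show ?thesis unfolding is_core_def using nrm sub1 sub2 by blast
qed

end
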